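(* With $\mathsf{pure}\ x := \hat x$ and $\mathsf{ap}\ F\ x := F@x$, the step functions satisfy the applicative functor laws up to $\asymp_{\mathfrak{S}}$ (where the setoids of function types carry extensional equality): for all appropriately typed $u,v,w$ (step functions) and $f$, $x$, $y$ (values), (Identity) $\hat{\mathbf{I}} @ v \asymp v$; (Composition) $\hat{\mathbf{B}} @ u @ v @ w \asymp u @ (v @ w)$; (Homomorphism) $\hat f @ \hat x \asymp \widehat{f x}$; (Interchange) $u @ \hat y \asymp \widehat{\mathrm{ev}_y} @ u$, where $\mathbf{I}x := x$, $\mathbf{B}fgx := f(gx)$ and $\mathrm{ev}_y := \lambda f. f\,y$.
   Context: Step functions. For a type $X$, $\mathfrak{S}X$ is the inductive type of (formal, rational) step functions on $[0,1]$: it has the constructors $\mathsf{const}\ x$ for $x\in X$ (also written $\hat x$), and $\mathsf{glue}\ o\ f\ g$ for $o\in(0,1)\cap\mathbb{Q}$ and $f,g\in\mathfrak{S}X$. Split. For $a\in(0,1)\cap\mathbb{Q}$: $\mathsf{SplitL}\ \hat x\ a := \hat x$, $\mathsf{SplitR}\ \hat x\ a:=\hat x$, and $\mathsf{SplitL}(\mathsf{glue}\ o\ f_l\ f_r)\ a :=$ $\mathsf{SplitL}\ f_l\ (a/o)$ if $a<o$; $f_l$ if $a=o$; $\mathsf{glue}\ (o/a)\ f_l\ (\mathsf{SplitL}\ f_r\ \tfrac{a-o}{1-o})$ if $a>o$. $\mathsf{SplitR}(\mathsf{glue}\ o\ f_l\ f_r)\ a :=$ $\mathsf{glue}\ \tfrac{o-a}{1-a}\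 (\mathsf{SplitR}\ f_l\ (a/o))\ f_r$ if $a<o$; $f_r$ if $a=o$; $\mathsf{SplitR}\ f_r\ \tfrac{a-o}{1-o}$ if $a>o$. Map and ap. $\mathsf{map}\ \varphi\ \hat x := \widehat{\varphi x}$, $\mathsf{map}\ \varphi\ (\mathsf{glue}\ o\ f\ g):=\mathsf{glue}\ o\ (\mathsf{map}\ \varphi\ f)(\mathsf{map}\ \varphi\ g)$. For $F\in\mathfrak{S}(X\Rightarrow Y)$, $x\in\mathfrak{S}X$: $\hat\varphi @ x := \mathsf{map}\ \varphi\ x$, and $(\mathsf{glue}\ o\ F_l\ F_r) @ x := \mathsf{glue}\ o\ (F_l @ \mathsf{SplitL}\ x\ o)\ (F_r @ \mathsf{SplitR}\ x\ o)$. $@$ associates to the left. Write $f\{\circledast\}g := (\lambda u v. u\circledast v)\circ f @ g$ where $\varphi\circ x:=\mathsf{map}\ \varphi\ x$. Fold. $\mathsf{fold}\ \varphi\ \psi\ \hat x:=\varphi x$, $\mathsf{fold}\ \varphi\ \psi\ (\mathsf{glue}\ o\ f\ g) := \psi\ o\ (\mathsf{fold}\ \varphi\ \psi\ f)(\mathsf{fold}\ \varphi\ \psi\ g)$. $\mathsf{fold}_\star$ is $\mathsf{fold}\ \mathrm{id}\ (\lambda o\,p\,q.\ p\wedge q)$. Equivalence. For a setoid $X$ and $f,g\in\mathfrak{S}X$, $f\asymp_{\mathfrak{S}X} g := \mathsf{fold}_\star(f\{\asymp_X\}g)$. *)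

theory Defs
  imports Main "HOL.Rat"
begin

text \<open>Formal rational step functions on [0,1]. Glue points are rationals;
the constraint that they lie in the open interval (0,1) is imposed by the
well-formedness predicate wf_sf.\<close>

datatype 'a sf = Const 'a | Glue rat "'a sf" "'a sf"

fun wf_sf :: "'a sf \<Rightarrow> bool" where
  "wf_sf (Const x) = True"
| "wf_sf (Glue p f g) = (0 < p \<and> p < 1 \<and> wf_sf f \<and> wf_sf g)"

fun splitL :: "'a sf \<Rightarrow> rat \<Rightarrow> 'a sf" where
  "splitL (Const x) a = Const x"
| "splitL (Glue p fl fr) a =
     (if a < p then splitL fl (a / p)
      else if a = p then fl
      else Glue (p / a) fl (splitL fr ((a - p) / (1 - p))))"

fun splitR :: "'a sf \<Rightarrow> rat \<Rightarrow> 'a sf" where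
  "splitR (Const x) a = Const x"
| "splitR (Glue p fl fr) a =
     (if a < p then Glue ((p - a) / (1 - a)) (splitR fl (a / p)) fr
      else if a = p then fr
      else splitR fr ((a - p) / (1 - p)))"

fun smap :: "('a \<Rightarrow> 'b) \<Rightarrow> 'a sf \<Rightarrow> 'b sf" where
  "smap \<phi> (Const x) = Const (\<phi> x)"
| "smap \<phi> (Glue p f g) = Glue p (smap \<phi> f) (smap \<phi> g)"

fun sap :: "('a \<Rightarrow> 'b) sf \<Rightarrow> 'a sf \<Rightarrow> 'b sf" (infixl "@@" 65) where
  "sap (Const \<phi>) x = smap \<phi> x"
| "sap (Glue p Fl Fr) x = Glue p (sap Fl (splitL x p)) (sap Fr (splitR x p))"

fun sfold :: "('a \<Rightarrow> 'b) \<Rightarrow> (rat \<Rightarrow> 'b \<Rightarrow> 'b \<Rightarrow> 'b) \<Rightarrow> 'a sf \<Rightarrow> 'b" where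
  "sfold \<phi> \<psi> (Const x) = \<phi> x"
| "sfold \<phi> \<psi> (Glue p f g) = \<psi> p (sfold \<phi> \<psi> f) (sfold \<phi> \<psi> g)"

definition sfold_star :: "bool sf \<Rightarrow> bool" where
  "sfold_star = sfold id (\<lambda>p a b. a \<and> b)"

definition slift2 :: "('a \<Rightarrow> 'b \<Rightarrow> 'c) \<Rightarrow> 'a sf \<Rightarrow> 'b sf \<Rightarrow> 'c sf" where
  "slift2 op f g = sap (smap (\<lambda>u v. op u v) f) g"

definition sf_equiv :: "('a \<Rightarrow> 'a \<Rightarrow> bool) \<Rightarrow> 'a sf \<Rightarrow> 'a sf \<Rightarrow> bool" where
  "sf_equiv R f g = sfold_star (slift2 R f g)"

end

theory Submission
  imports Defs
begin

lemma L1: "0<b \<Longrightarrow> b<a \<Longrightarrow> a<1 \<Longrightarrow> wf_sf x \<Longrightarrow> splitL (splitL x a) (b/a) = splitL x (b::rat)"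
proof (induction x arbitrary: a b)
  case (Const x) then show ?case by simp
next
  case (Glue p l r)
  have p: "0<p" "p<1" using Glue by auto
  consider "a<p" | "a=p" | "p<a" by fastforce
  then show ?case
  proof cases
    case 1
    have "splitL (splitL l (a/p)) ((b/p)/(a/p)) = splitL l (b/p)"
      using Glue 1 p by (intro Glue.IH(1)) (auto simp: divide_strict_right_mono)
    moreover have "(b/p)/(a/p) = b/a" using p by simp
    ultimately show ?thesis using 1 Glue by auto
  next
    case 2 then show ?thesis using Glue by auto
  next
    case 3
    consider "b<p" | "b=p" | "p<b" by fastforce
    then show ?thesis
    proof cases
      case 1 then show ?thesis using 3 Glue p by (auto simp: field_simps)
    next
      case 2 then show ?thesis using 3 Glue p by (auto simp: field_simps)
    next
      case 4: 3
      define c where "c = (a-p)/(1-p)"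
      have IH: "splitL (splitL r c) (((b-p)/(1-p))/c) = splitL r ((b-p)/(1-p))"
        using Glue 3 4 p unfolding c_def
        using mult_pos_pos[of "a-b" "1-p"] by (intro Glue.IH(2)) (auto simp: field_simps)
      have e: "((b/a - p/a)/(1-p/a)) = ((b-p)/(1-p))/c" using 3 4 p Glue(4) unfolding c_def
      proof -
        have a0: "a \<noteq> 0" "1-p \<noteq> 0" "a - p \<noteq> 0" using 3 p by auto
        have "b/a - p/a = (b-p)/a" by (simp add: diff_divide_distrib)
        moreover have "1-p/a = (a-p)/a" using a0 by (simp add: field_simps)
        ultimately show "(b/a - p/a)/(1-p/a) = ((b-p)/(1-p))/((a-p)/(1-p))" using a0 by simp
      qed
      have f: "(p/a)/(b/a) = p/b" "\<not> b/a < p/a" "b/a \<noteq> p/a" "\<not> a < p" "a \<noteq> p" "\<not> b < p" "b \<noteq> p"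
        using 3 4 p Glue(4) by (auto simp: field_simps)
      have g1: "splitL (Glue p l r) a = Glue (p/a) l (splitL r c)" using f by (simp add: c_def)
      have g2: "splitL (Glue p l r) b = Glue (p/b) l (splitL r ((b-p)/(1-p)))" using f by simp
      have g3: "splitL (Glue (p/a) l (splitL r c)) (b/a) = Glue ((p/a)/(b/a)) l (splitL (splitL r c) ((b/a-p/a)/(1-p/a)))"
        by (simp only: splitL.simps f if_False)
      show ?thesis unfolding g1 g2 g3 f(1) e IH ..
    qed
  qed
qed

lemma H1: "z \<noteq> 0 \<Longrightarrow> z \<noteq> y \<Longrightarrow> (x/z - y/z)/(1-y/z) = (x-y)/(z-y::rat)"
proof -
  assume a0: "z \<noteq> 0" "z \<noteq> y"
  have "x/z - y/z = (x-y)/z" by (simp add: diff_divide_distrib)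
  moreover have "1-y/z = (z-y)/z" using a0 by (simp add: field_simps)
  ultimately show ?thesis using a0 by simp
qed
lemma H2: "y \<noteq> 1 \<Longrightarrow> ((x-y)/(1-y))/((z-y)/(1-y)) = (x-y)/(z-y::rat)"
  by simp

lemma L2: "0<b \<Longrightarrow> b<a \<Longrightarrow> a<1 \<Longrightarrow> wf_sf x \<Longrightarrow>
  splitR (splitL x a) (b/a) = splitL (splitR x b) ((a-b)/(1-b::rat))"
proof (induction x arbitrary: a b)
  case (Const x) then show ?case by simp
next
  case (Glue p l r)
  have p: "0<p" "p<1" using Glue by auto
  have ab: "0<b" "b<a" "a<1" by fact+
  define d where "d = (a-b)/(1-b)"
  define q where "q = (p-b)/(1-b)"
  consider "a<p" | "a=p" | "p<a" by fastforce
  then show ?case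
  proof cases
    case 1
    have dq: "d < q" using 1 ab unfolding d_def q_def by (simp add: divide_strict_right_mono)
    have IH: "splitR (splitL l (a/p)) ((b/p)/(a/p)) = splitL (splitR l (b/p)) ((a/p-b/p)/(1-b/p))"
      using Glue 1 p by (intro Glue.IH(1)) (auto simp: divide_strict_right_mono)
    have e1: "(b/p)/(a/p) = b/a" using p by simp
    have e2: "(a/p-b/p)/(1-b/p) = d/q" unfolding d_def q_def
    proof -
      have a0: "p \<noteq> 0" "1-b \<noteq> 0" "p - b \<noteq> 0" using 1 p ab by auto
      have "a/p - b/p = (a-b)/p" by (simp add: diff_divide_distrib)
      moreover have "1-b/p = (p-b)/p" using a0 by (simp add: field_simps)
      ultimately show "(a/p-b/p)/(1-b/p) = ((a-b)/(1-b))/((p-b)/(1-b))" using a0 by simp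
    qed
    have g1: "splitL (Glue p l r) a = splitL l (a/p)" using 1 by simp
    have g2: "splitR (Glue p l r) b = Glue q (splitR l (b/p)) r" using 1 ab by (simp add: q_def)
    have g3: "splitL (Glue q (splitR l (b/p)) r) d = splitL (splitR l (b/p)) (d/q)" using dq by simp
    show ?thesis unfolding g1 g2 d_def[symmetric] g3 using IH unfolding e1 e2 .
  next
    case 2
    have "d = q" unfolding d_def q_def using 2 by simp
    then show ?thesis using 2 ab p by (simp add: d_def[symmetric] q_def[symmetric])
  next
    case 3
    define c where "c = (a-p)/(1-p)"
    have g1: "splitL (Glue p l r) a = Glue (p/a) l (splitL r c)" using 3 by (simp add: c_def)
    consider "b<p" | "b=p" | "p<b" by fastforce
    then show ?thesis
    proof cases
      case 1
      have qd: "q < d" using 3 ab unfolding d_def q_def by (simp add: divide_strict_right_mono)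
      have h: "b/a < p/a" using 1 ab by (simp add: divide_strict_right_mono)
      have g2: "splitR (Glue (p/a) l (splitL r c)) (b/a) =
         Glue ((p/a-b/a)/(1-b/a)) (splitR l ((b/a)/(p/a))) (splitL r c)" using h by simp
      have g3: "splitR (Glue p l r) b = Glue q (splitR l (b/p)) r" using 1 ab by (simp add: q_def)
      have g4: "splitL (Glue q (splitR l (b/p)) r) d = Glue (q/d) (splitR l (b/p)) (splitL r ((d-q)/(1-q)))"
        using qd by simp
      have e1: "(p/a-b/a)/(1-b/a) = q/d" unfolding d_def q_def using p ab 1 3
        by (simp add: H1 H2)
      have e2: "(b/a)/(p/a) = b/p" using ab by simp
      have e3: "(d-q)/(1-q) = c" unfolding d_def q_def c_def using p ab 1 3
        using H1[of "1-b" "p-b" "a-b"] by simp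
      show ?thesis unfolding g1 g2 g3 d_def[symmetric] g4 e1 e2 e3 ..
    next
      case 2
      have h: "b/a = p/a" using 2 by simp
      show ?thesis unfolding g1 using 2 3 ab by (simp add: c_def)
    next
      case 4: 3
      define e where "e = (b-p)/(1-p)"
      have IH: "splitR (splitL r c) (e/c) = splitL (splitR r e) ((c-e)/(1-e))"
        using Glue 3 4 p ab unfolding c_def e_def
        using mult_pos_pos[of "a-b" "1-p"] by (intro Glue.IH(2)) (auto simp: field_simps)
      have "p/a < b/a" using 4 ab by (simp add: divide_strict_right_mono)
      then have h: "\<not> b/a < p/a" "b/a \<noteq> p/a" by auto
      have g2: "splitR (Glue (p/a) l (splitL r c)) (b/a) =
         splitR (splitL r c) ((b/a-p/a)/(1-p/a))" using h by simp
      have g3: "splitR (Glue p l r) b = splitR r e" using 4 3 ab by (simp add: e_def)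
      have e1: "(b/a-p/a)/(1-p/a) = e/c" unfolding c_def e_def using p ab 4 3
      proof -
        have a0: "a \<noteq> 0" "1-p \<noteq> 0" "a - p \<noteq> 0" using 3 p by auto
        have "b/a - p/a = (b-p)/a" by (simp add: diff_divide_distrib)
        moreover have "1-p/a = (a-p)/a" using a0 by (simp add: field_simps)
        ultimately show "(b/a - p/a)/(1-p/a) = ((b-p)/(1-p))/((a-p)/(1-p))" using a0 by simp
      qed
      have e2: "(c-e)/(1-e) = (a-b)/(1-b)" unfolding c_def e_def using p ab 4 3
      proof -
        have a0: "1-b \<noteq> 0" "1-p \<noteq> 0" using ab p by auto
        have "(a-p)/(1-p) - (b-p)/(1-p) = (a-b)/(1-p)" by (simp add: diff_divide_distrib)
        moreover have "1-(b-p)/(1-p) = (1-b)/(1-p)" using a0 by (simp add: field_simps)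
        ultimately show "((a-p)/(1-p) - (b-p)/(1-p))/(1-(b-p)/(1-p)) = (a-b)/(1-b)" using a0 by simp
      qed
      show ?thesis unfolding g1 g2 g3 e1 IH e2 ..
    qed
  qed
qed

lemma L3: "0<a \<Longrightarrow> a<b \<Longrightarrow> b<1 \<Longrightarrow> wf_sf x \<Longrightarrow>
  splitR (splitR x a) ((b-a)/(1-a)) = splitR x (b::rat)"
proof (induction x arbitrary: a b)
  case (Const x) then show ?case by simp
next
  case (Glue p l r)
  have p: "0<p" "p<1" using Glue by auto
  have ab: "0<a" "a<b" "b<1" by fact+
  define e where "e = (b-a)/(1-a)"
  define q where "q = (p-a)/(1-a)"
  consider "a<p" | "a=p" | "p<a" by fastforce
  then show ?case
  proof cases
    case 1
    have g1: "splitR (Glue p l r) a = Glue q (splitR l (a/p)) r" using 1 by (simp add: q_def)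
    consider "b<p" | "b=p" | "p<b" by fastforce
    then show ?thesis
    proof cases
      case 1
      have eq: "e < q" using 1 ab unfolding e_def q_def by (simp add: divide_strict_right_mono)
      have g2: "splitR (Glue q (splitR l (a/p)) r) e = Glue ((q-e)/(1-e)) (splitR (splitR l (a/p)) (e/q)) r"
        using eq by simp
      have g3: "splitR (Glue p l r) b = Glue ((p-b)/(1-b)) (splitR l (b/p)) r" using 1 by simp
      have IH: "splitR (splitR l (a/p)) ((b/p-a/p)/(1-a/p)) = splitR l (b/p)"
        using Glue 1 p ab by (intro Glue.IH(1)) (auto simp: divide_strict_right_mono)
      have e1: "(b/p-a/p)/(1-a/p) = e/q" unfolding e_def q_def using 1 p ab by (simp add: H1 H2)
      have e2: "(q-e)/(1-e) = (p-b)/(1-b)" unfolding e_def q_def using 1 p ab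
        H1[of "1-a" "b-a" "p-a"] by simp
      show ?thesis unfolding g1 e_def[symmetric] g2 g3 e2 using IH unfolding e1 by simp
    next
      case 2
      have "e = q" unfolding e_def q_def using 2 by simp
      then show ?thesis unfolding g1 e_def[symmetric] using 2 by simp
    next
      case 3
      have eq: "q < e" using 3 ab unfolding e_def q_def by (simp add: divide_strict_right_mono)
      have g2: "splitR (Glue q (splitR l (a/p)) r) e = splitR r ((e-q)/(1-q))"
        using eq by simp
      have g3: "splitR (Glue p l r) b = splitR r ((b-p)/(1-p))" using 3 by simp
      have e2: "(e-q)/(1-q) = (b-p)/(1-p)" unfolding e_def q_def using 3 p ab
        H1[of "1-a" "p-a" "b-a"] by simp
      show ?thesis unfolding g1 e_def[symmetric] g2 g3 e2 ..
    qed
  next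
    case 2
    then show ?thesis using ab by simp
  next
    case 3
    define c where "c = (a-p)/(1-p)"
    define c' where "c' = (b-p)/(1-p)"
    have g1: "splitR (Glue p l r) a = splitR r c" using 3 by (simp add: c_def)
    have g2: "splitR (Glue p l r) b = splitR r c'" using 3 ab by (simp add: c'_def)
    have IH: "splitR (splitR r c) ((c'-c)/(1-c)) = splitR r c'"
      using Glue 3 p ab unfolding c_def c'_def by (intro Glue.IH(2)) (auto simp: divide_strict_right_mono)
    have e1: "(c'-c)/(1-c) = e" unfolding e_def c_def c'_def using 3 p ab
        H1[of "1-p" "a-p" "b-p"] by simp
    show ?thesis unfolding g1 g2 e_def[symmetric] using IH unfolding e1 .
  qed
qed

lemma L4: "0<a \<Longrightarrow> a<b \<Longrightarrow> b<1 \<Longrightarrow> wf_sf x \<Longrightarrow>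
  splitL (splitR x a) ((b-a)/(1-a)) = splitR (splitL x b) (a/(b::rat))"
proof (induction x arbitrary: a b)
  case (Const x) then show ?case by simp
next
  case (Glue p l r)
  have p: "0<p" "p<1" using Glue by auto
  have ab: "0<a" "a<b" "b<1" by fact+
  define e where "e = (b-a)/(1-a)"
  define q where "q = (p-a)/(1-a)"
  consider "b<p" | "b=p" | "p<b" by fastforce
  then show ?case
  proof cases
    case 1
    have eq: "e < q" using 1 ab unfolding e_def q_def by (simp add: divide_strict_right_mono)
    have g1: "splitR (Glue p l r) a = Glue q (splitR l (a/p)) r" using 1 ab by (simp add: q_def)
    have g2: "splitL (Glue q (splitR l (a/p)) r) e = splitL (splitR l (a/p)) (e/q)" using eq by simp
    have g3: "splitL (Glue p l r) b = splitL l (b/p)" using 1 by simp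
    have IH: "splitL (splitR l (a/p)) ((b/p-a/p)/(1-a/p)) = splitR (splitL l (b/p)) ((a/p)/(b/p))"
      using Glue 1 p ab by (intro Glue.IH(1)) (auto simp: divide_strict_right_mono)
    have e1: "(b/p-a/p)/(1-a/p) = e/q" unfolding e_def q_def using 1 p ab by (simp add: H1 H2)
    have e2: "(a/p)/(b/p) = a/b" using p by simp
    show ?thesis unfolding g1 e_def[symmetric] g2 g3 using IH unfolding e1 e2 .
  next
    case 2
    have "e = q" unfolding e_def q_def using 2 by simp
    then show ?thesis unfolding e_def[symmetric] using 2 ab by (simp add: q_def)
  next
    case 3
    define c' where "c' = (b-p)/(1-p)"
    have g1: "splitL (Glue p l r) b = Glue (p/b) l (splitL r c')" using 3 by (simp add: c'_def)
    consider "a<p" | "a=p" | "p<a" by fastforce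
    then show ?thesis
    proof cases
      case 1
      have qe: "q < e" using 3 ab unfolding e_def q_def by (simp add: divide_strict_right_mono)
      have h: "a/b < p/b" using 1 ab by (simp add: divide_strict_right_mono)
      have g2: "splitR (Glue (p/b) l (splitL r c')) (a/b) =
         Glue ((p/b-a/b)/(1-a/b)) (splitR l ((a/b)/(p/b))) (splitL r c')" using h by simp
      have g3: "splitR (Glue p l r) a = Glue q (splitR l (a/p)) r" using 1 by (simp add: q_def)
      have g4: "splitL (Glue q (splitR l (a/p)) r) e = Glue (q/e) (splitR l (a/p)) (splitL r ((e-q)/(1-q)))"
        using qe by simp
      have e1: "(p/b-a/b)/(1-a/b) = q/e" unfolding e_def q_def using p ab 1 3
        by (simp add: H1 H2)
      have e2: "(a/b)/(p/b) = a/p" using ab by simp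
      have e3: "(e-q)/(1-q) = c'" unfolding e_def q_def c'_def using p ab 1 3
        using H1[of "1-a" "p-a" "b-a"] by simp
      show ?thesis unfolding g1 g2 g3 e_def[symmetric] g4 e1 e2 e3 ..
    next
      case 2
      have h: "a/b = p/b" using 2 by simp
      show ?thesis unfolding g1 using 2 3 ab by (simp add: c'_def e_def)
    next
      case 4: 3
      define c where "c = (a-p)/(1-p)"
      have IH: "splitL (splitR r c) ((c'-c)/(1-c)) = splitR (splitL r c') (c/c')"
        using Glue 3 4 p ab unfolding c_def c'_def
        by (intro Glue.IH(2)) (auto simp: divide_strict_right_mono)
      have "p/b < a/b" using 4 ab by (simp add: divide_strict_right_mono)
      then have h: "\<not> a/b < p/b" "a/b \<noteq> p/b" by auto
      have g2: "splitR (Glue (p/b) l (splitL r c')) (a/b) =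
         splitR (splitL r c') ((a/b-p/b)/(1-p/b))" using h by simp
      have g3: "splitR (Glue p l r) a = splitR r c" using 4 ab by (simp add: c_def)
      have e1: "(a/b-p/b)/(1-p/b) = c/c'" unfolding c_def c'_def using p ab 4 3
        by (simp add: H1 H2)
      have e2: "(c'-c)/(1-c) = e" unfolding c_def c'_def e_def using p ab 4 3
        using H1[of "1-p" "a-p" "b-p"] by simp
      show ?thesis unfolding g1 g2 g3 e_def[symmetric] e1 using IH unfolding e2 .
    qed
  qed
qed

lemma wfL: "0<a \<Longrightarrow> a<1 \<Longrightarrow> wf_sf x \<Longrightarrow> wf_sf (splitL x (a::rat))"
  by (induction x arbitrary: a) (auto simp: field_simps)
lemma wfR: "0<a \<Longrightarrow> a<1 \<Longrightarrow> wf_sf x \<Longrightarrow> wf_sf (splitR x (a::rat))"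
  by (induction x arbitrary: a) (auto simp: field_simps)
lemma wf_smap: "wf_sf (smap f x) = wf_sf x" by (induction x) auto
lemma wf_ap: "wf_sf F \<Longrightarrow> wf_sf x \<Longrightarrow> wf_sf (F @@ x)"
  by (induction F arbitrary: x) (auto simp: wf_smap wfL wfR)
lemma splitL_smap: "splitL (smap f x) a = smap f (splitL x a)"
  by (induction x arbitrary: a) auto
lemma splitR_smap: "splitR (smap f x) a = smap f (splitR x a)"
  by (induction x arbitrary: a) auto

lemma split_ap: "wf_sf F \<Longrightarrow> wf_sf x \<Longrightarrow> 0<a \<Longrightarrow> a<1 \<Longrightarrow>
   splitL (F @@ x) a = splitL F a @@ splitL x a \<and> splitR (F @@ x) a = splitR F a @@ splitR x a"
proof (induction F arbitrary: x a)
  case (Const f) then show ?case by (simp add: splitL_smap splitR_smap)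
next
  case (Glue p Fl Fr)
  have p: "0<p" "p<1" and wf: "wf_sf Fl" "wf_sf Fr" using Glue by auto
  have wfx: "wf_sf (splitL x p)" "wf_sf (splitR x p)" using Glue p wfL wfR by auto
  consider "a<p" | "a=p" | "p<a" by fastforce
  then show ?case
  proof cases
    case 1
    have a1: "0 < a/p" "a/p < 1" using 1 Glue p by auto
    have IH: "splitL (Fl @@ splitL x p) (a/p) = splitL Fl (a/p) @@ splitL (splitL x p) (a/p)"
        "splitR (Fl @@ splitL x p) (a/p) = splitR Fl (a/p) @@ splitR (splitL x p) (a/p)"
      using Glue.IH(1)[OF wf(1) wfx(1) a1] by auto
    have s1: "splitL (splitL x p) (a/p) = splitL x a" using L1[of a p x] 1 Glue p by simp
    have s2: "splitR (splitL x p) (a/p) = splitL (splitR x a) ((p-a)/(1-a))"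
      using L2[of a p x] 1 Glue p by simp
    have s3: "splitR (splitR x a) ((p-a)/(1-a)) = splitR x p"
      using L3[of a p x] 1 Glue p by simp
    show ?thesis using 1 IH s1 s2 s3 by simp
  next
    case 2 then show ?thesis by simp
  next
    case 3
    define c where "c = (a-p)/(1-p)"
    have c: "0 < c" "c < 1" using 3 Glue p unfolding c_def by (auto simp: field_simps)
    have IH: "splitL (Fr @@ splitR x p) c = splitL Fr c @@ splitL (splitR x p) c"
        "splitR (Fr @@ splitR x p) c = splitR Fr c @@ splitR (splitR x p) c"
      using Glue.IH(2)[OF wf(2) wfx(2) c] by auto
    have s1: "splitL (splitL x a) (p/a) = splitL x p" using L1[of p a x] 3 Glue p by simp
    have s2: "splitR (splitL x a) (p/a) = splitL (splitR x p) c"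
      using L2[of p a x] 3 Glue p by (simp add: c_def)
    have s3: "splitR (splitR x p) c = splitR x a"
      using L3[of p a x] 3 Glue p by (simp add: c_def)
    have nc: "\<not> p/a < p/a" by simp
    show ?thesis using 3 IH s1 s2 s3 by (simp add: c_def[symmetric])
  qed
qed

lemma smap_comp: "smap (\<lambda>z. \<phi> (g z)) w = smap \<phi> (smap g w)"
  by (induction w) auto

lemma comp_const: "smap (\<lambda>g z. \<phi> (g z)) v @@ w = smap \<phi> (v @@ w)"
proof (induction v arbitrary: w)
  case (Const g) then show ?case by (simp add: smap_comp)
next
  case (Glue p l r) then show ?case by simp
qed

lemma comp_eq: "wf_sf u \<Longrightarrow> wf_sf v \<Longrightarrow> wf_sf w \<Longrightarrow>
  smap (\<lambda>f g z. f (g z)) u @@ v @@ w = u @@ (v @@ w)"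
proof (induction u arbitrary: v w)
  case (Const \<phi>)
  show ?case by (simp add: comp_const)
next
  case (Glue p ul ur)
  have p: "0<p" "p<1" "wf_sf ul" "wf_sf ur" using Glue.prems by auto
  have sp: "splitL (v @@ w) p = splitL v p @@ splitL w p" "splitR (v @@ w) p = splitR v p @@ splitR w p"
    using split_ap[of v w p] Glue.prems p by auto
  have i1: "smap (\<lambda>f g z. f (g z)) ul @@ splitL v p @@ splitL w p = ul @@ (splitL v p @@ splitL w p)"
    using p Glue.prems by (intro Glue.IH(1)) (auto intro: wfL)
  have i2: "smap (\<lambda>f g z. f (g z)) ur @@ splitR v p @@ splitR w p = ur @@ (splitR v p @@ splitR w p)"
    using p Glue.prems by (intro Glue.IH(2)) (auto intro: wfR)
  show ?case by (simp only: smap.simps sap.simps sp i1 i2)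
qed

lemma refl_equiv: "(\<And>z. R z z) \<Longrightarrow> sf_equiv R f f"
proof -
  assume r: "\<And>z. R z z"
  have "sfold_star (smap R f @@ f)"
    by (induction f) (auto simp: sfold_star_def r)
  then show ?thesis by (simp add: sf_equiv_def slift2_def)
qed

lemma interchange: "u @@ Const y = smap (\<lambda>h. h y) u"
  by (induction u) auto

lemma smap_id: "smap (\<lambda>z. z) v = v" by (induction v) auto

theorem mainTheorem4:
  fixes R1 :: "'a \<Rightarrow> 'a \<Rightarrow> bool"
    and R2 :: "'c \<Rightarrow> 'c \<Rightarrow> bool"
    and R3 :: "'e \<Rightarrow> 'e \<Rightarrow> bool"
    and R4 :: "'h \<Rightarrow> 'h \<Rightarrow> bool"
    and v :: "'a sf"
    and u :: "('b \<Rightarrow> 'c) sf" and v2 :: "('bb \<Rightarrow> 'b) sf" and w :: "'bb sf"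
    and f :: "'d \<Rightarrow> 'e" and x :: "'d"
    and u4 :: "('g \<Rightarrow> 'h) sf" and y :: "'g"
  assumes "equivp R1" and "equivp R2" and "equivp R3" and "equivp R4"
    and "wf_sf v" and "wf_sf u" and "wf_sf v2" and "wf_sf w" and "wf_sf u4"
  shows "sf_equiv R1 (Const (\<lambda>z. z) @@ v) v
    \<and> sf_equiv R2 (Const (\<lambda>f g z. f (g z)) @@ u @@ v2 @@ w) (u @@ (v2 @@ w))
    \<and> sf_equiv R3 (Const f @@ Const x) (Const (f x))
    \<and> sf_equiv R4 (u4 @@ Const y) (Const (\<lambda>h. h y) @@ u4)"
proof -
  have r: "\<And>z. R1 z z" "\<And>z. R2 z z" "\<And>z. R3 z z" "\<And>z. R4 z z"
    using assms(1-4) by (auto simp: equivp_reflp)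
  show ?thesis
    using refl_equiv[of R1, OF r(1)] refl_equiv[of R2, OF r(2)] refl_equiv[of R3, OF r(3)]
      refl_equiv[of R4, OF r(4)] comp_eq[OF assms(6-8)]
    by (simp add: smap_id interchange)
qed

end
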